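(* Let $n\in\mathbb{N}$, $\sigma\in[1/n,1]$, $\varepsilon\in(0,1)$, and let $q$ be an $n$-arm bandit with expected utilities vector $u\in[0,1]^n$. Let $\tilde u\in[0,1]^n$ be an arbitrary vector (the message received by the verifier of Protocol 1). Suppose there exists a $\sigma$-smooth strategy $\pi$ with $|\pi\cdot u-\pi\cdot\tilde u|\ge\varepsilon/2$. Then the verifier of Protocol 1, run on $\tilde u$ with oracle access to $\mathcal{O}_q$, rejects with probability at least $2/3$.
   Context: An $n$-arm bandit is a vector $q=(q_1,\dots,q_n)$ of distributions on $[0,1]$; its oracle $\mathcal{O}_q$ returns, on query ("pull") $i$, an independent sample from $q_i$; $u_i=\mathbb{E}_{x\sim q_i}[x]$. A strategy $\pi$ is a distribution on $[n]$ with $\pi\cdot u=\sum_i\pi_iu_i$; it is $\sigma$-smooth if $\pi_i\le\sigma$ for all $i$. Protocol 1 (parameters $n,\sigma,\varepsilon$): Let $L=\log_4(1/\varepsilon)+2$ and $B=\{0,1,\dots,\lceil\log_4(1/\varepsilon)\rceil\}$. For $b\in B$ let $\varepsilon_b=\varepsilon\cdot4^b$, $a_b=\lceil 4^b\cdot 4n\sigma\cdot L\cdot\ln 6\rceil$ and $m_b=\lceil 128\ln(12\,L\,a_b)/\varepsilon_b^2\rceil$. The honest prover pulls each arm $i\in[n]$ exactly $k_P=\lceil128\ln(12n/\varepsilon)/\varepsilon^2\rceil$ times and sends the vector $\tilde u$ of empirical averages. The verifier receives $\tilde u\in[0,1]^n$; for each $b\in B$ and each $t\in[a_b]$, it samples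 $i_{b,t}$ uniformly from $[n]$ (independently), pulls arm $i_{b,t}$ exactly $m_b$ times, lets $\hat u_{i_{b,t}}$ be the empirical average, and rejects (terminating) if $|\tilde u_{i_{b,t}}-\hat u_{i_{b,t}}|>\varepsilon_b/8$. If it never rejects, it outputs the strategy $\pi_V$ computed from $\tilde u$ as follows: sort indices $i_1,\dots,i_n$ so that $\tilde u_{i_1}\ge\dots\ge\tilde u_{i_n}$, set $\pi_{i_j}=\sigma$ for $j\le\lfloor1/\sigma\rfloor$, $\pi_{i_j}=1-\sigma\lfloor1/\sigma\rfloor$ for $j=\lfloor1/\sigma\rfloor+1$, and $\pi_{i_j}=0$ otherwise. *)

theory Defs
  imports "HOL-Probability.Probability"
begin

text \<open>Arms are indexed by 0..<n. A bandit is a family q of probability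
measures on the Borel reals, each supported on [0,1].\<close>

definition is_bandit :: "nat \<Rightarrow> (nat \<Rightarrow> real measure) \<Rightarrow> bool" where
  "is_bandit n q \<longleftrightarrow> (\<forall>i<n. prob_space (q i) \<and> sets (q i) = sets borel
      \<and> measure (q i) {0..1} = 1)"

definition smooth_strategy :: "nat \<Rightarrow> real \<Rightarrow> (nat \<Rightarrow> real) \<Rightarrow> bool" where
  "smooth_strategy n \<sigma> \<pi> \<longleftrightarrow> (\<forall>i<n. 0 \<le> \<pi> i \<and> \<pi> i \<le> \<sigma>) \<and> (\<Sum>i<n. \<pi> i) = 1"

definition dotp :: "nat \<Rightarrow> (nat \<Rightarrow> real) \<Rightarrow> (nat \<Rightarrow> real) \<Rightarrow> real" where
  "dotp n \<pi> v = (\<Sum>i<n. \<pi> i * v i)"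

definition P1_L :: "real \<Rightarrow> real" where
  "P1_L \<epsilon> = log 4 (1/\<epsilon>) + 2"

definition P1_B :: "real \<Rightarrow> nat set" where
  "P1_B \<epsilon> = {0..nat \<lceil>log 4 (1/\<epsilon>)\<rceil>}"

definition P1_eps :: "real \<Rightarrow> nat \<Rightarrow> real" where
  "P1_eps \<epsilon> b = \<epsilon> * 4 ^ b"

definition P1_a :: "nat \<Rightarrow> real \<Rightarrow> real \<Rightarrow> nat \<Rightarrow> nat" where
  "P1_a n \<sigma> \<epsilon> b = nat \<lceil>4 ^ b * 4 * real n * \<sigma> * P1_L \<epsilon> * ln 6\<rceil>"

definition P1_m :: "nat \<Rightarrow> real \<Rightarrow> real \<Rightarrow> nat \<Rightarrow> nat" where
  "P1_m n \<sigma> \<epsilon> b =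
     nat \<lceil>128 * ln (12 * P1_L \<epsilon> * real (P1_a n \<sigma> \<epsilon> b)) / (P1_eps \<epsilon> b)\<^sup>2\<rceil>"

definition P1_tests :: "nat \<Rightarrow> real \<Rightarrow> real \<Rightarrow> (nat \<times> nat) set" where
  "P1_tests n \<sigma> \<epsilon> = {(b, t). b \<in> P1_B \<epsilon> \<and> t \<in> {1..P1_a n \<sigma> \<epsilon> b}}"

definition test_measure :: "nat \<Rightarrow> (nat \<Rightarrow> real measure) \<Rightarrow> nat \<Rightarrow> (nat \<times> (nat \<Rightarrow> real)) measure" where
  "test_measure n q m =
     measure_pmf (pmf_of_set {..<n}) \<bind>
       (\<lambda>i. distr (PiM {..<m} (\<lambda>_. q i))
               (count_space UNIV \<Otimes>\<^sub>M PiM {..<m} (\<lambda>_. borel)) (\<lambda>xs. (i, xs)))"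

definition verifier_measure :: "nat \<Rightarrow> real \<Rightarrow> real \<Rightarrow> (nat \<Rightarrow> real measure)
     \<Rightarrow> ((nat \<times> nat) \<Rightarrow> (nat \<times> (nat \<Rightarrow> real))) measure" where
  "verifier_measure n \<sigma> \<epsilon> q =
     PiM (P1_tests n \<sigma> \<epsilon>) (\<lambda>(b, t). test_measure n q (P1_m n \<sigma> \<epsilon> b))"

definition test_fails :: "(nat \<Rightarrow> real) \<Rightarrow> real \<Rightarrow> nat \<Rightarrow> nat \<times> (nat \<Rightarrow> real) \<Rightarrow> bool" where
  "test_fails ut thr m r = (case r of (i, xs) \<Rightarrow> \<bar>ut i - (\<Sum>j<m. xs j) / real m\<bar> > thr)"

text \<open>The verifier rejects iff some test fails (early termination does not
change the rejection probability).\<close>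

definition verifier_rejects_event :: "nat \<Rightarrow> real \<Rightarrow> real \<Rightarrow> (nat \<Rightarrow> real measure) \<Rightarrow> (nat \<Rightarrow> real)
     \<Rightarrow> ((nat \<times> nat) \<Rightarrow> (nat \<times> (nat \<Rightarrow> real))) set" where
  "verifier_rejects_event n \<sigma> \<epsilon> q ut =
     {\<omega> \<in> space (verifier_measure n \<sigma> \<epsilon> q).
        \<exists>(b, t) \<in> P1_tests n \<sigma> \<epsilon>.
          test_fails ut (P1_eps \<epsilon> b / 8) (P1_m n \<sigma> \<epsilon> b) (\<omega> (b, t))}"

end

theory Submission
  imports Defs
begin

lemma test_measure_alt:
  assumes "0 < n"
  shows "test_measure n q m = measure_pmf (pmf_of_set {..<n}) \<bind>
       (\<lambda>i. distr (PiM {..<m} (\<lambda>_. q (if i < n then i else 0)))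
               (count_space UNIV \<Otimes>\<^sub>M PiM {..<m} (\<lambda>_. borel)) (\<lambda>xs. (i, xs)))"
proof -
  let ?N = "count_space UNIV \<Otimes>\<^sub>M PiM {..<m} (\<lambda>_. borel)"
  let ?M = "measure_pmf (pmf_of_set {..<n})"
  define f where "f = (\<lambda>i. distr (PiM {..<m} (\<lambda>_. q i)) ?N (\<lambda>xs. (i, xs)))"
  define g where "g = (\<lambda>i. distr (PiM {..<m} (\<lambda>_. q (if i < n then i else 0))) ?N (\<lambda>xs. (i, xs)))"
  have sp: "set_pmf (pmf_of_set {..<n}) = {..<n}" using assms by (subst set_pmf_of_set) auto
  have e: "emeasure ?M (f -` A \<inter> space ?M) = emeasure ?M (g -` A \<inter> space ?M)" for A
  proof -
    have "emeasure ?M (f -` A \<inter> space ?M) = emeasure ?M ((f -` A) \<inter> set_pmf (pmf_of_set {..<n}))"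
      by (simp add: emeasure_Int_set_pmf)
    also have "(f -` A) \<inter> set_pmf (pmf_of_set {..<n}) = (g -` A) \<inter> set_pmf (pmf_of_set {..<n})"
      unfolding sp f_def g_def by auto
    also have "emeasure ?M \<dots> = emeasure ?M (g -` A \<inter> space ?M)"
      by (simp add: emeasure_Int_set_pmf)
    finally show ?thesis .
  qed
  have "sets (f x) = sets ?N" "sets (g x) = sets ?N" for x unfolding f_def g_def by auto
  then have sa: "subprob_algebra (f x) = subprob_algebra (g y)" for x y
    by (metis subprob_algebra_cong)
  have "distr ?M (subprob_algebra (f (SOME x. x \<in> space ?M))) f
      = distr ?M (subprob_algebra (g (SOME x. x \<in> space ?M))) g"
    unfolding distr_def e sa[of "SOME x. x \<in> space ?M" "SOME x. x \<in> space ?M"] by (rule refl)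
  then show ?thesis unfolding test_measure_def bind_def f_def[symmetric] g_def[symmetric] by simp
qed

lemma test_measure_props:
  fixes n m :: nat and q :: "nat \<Rightarrow> real measure"
  assumes n: "0 < n" and qb: "is_bandit n q"
  defines "N \<equiv> count_space UNIV \<Otimes>\<^sub>M PiM {..<m} (\<lambda>_. borel)"
  shows "prob_space (test_measure n q m)"
    and "sets (test_measure n q m) = sets N"
    and "X \<in> sets N \<Longrightarrow> measure (test_measure n q m) X =
          (\<Sum>i<n. measure (PiM {..<m} (\<lambda>_. q i)) (Pair i -` X \<inter> space (PiM {..<m} (\<lambda>_. q i)))) / real n"
proof -
  define g where "g = (\<lambda>i. distr (PiM {..<m} (\<lambda>_. q (if i < n then i else 0))) N (\<lambda>xs. (i, xs)))"
  have T: "test_measure n q m = measure_pmf (pmf_of_set {..<n}) \<bind> g"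
    unfolding g_def N_def by (rule test_measure_alt[OF n])
  have qj: "prob_space (q j)" "sets (q j) = sets borel" if "j < n" for j
    using qb that unfolding is_bandit_def by auto
  have PS: "prob_space (PiM {..<m} (\<lambda>_. q j))" if "j < n" for j
    by (rule prob_space_PiM) (use qj[OF that] in auto)
  have sPi: "sets (PiM {..<m} (\<lambda>_. q j)) = sets (PiM {..<m} (\<lambda>_. borel))" if "j < n" for j
    by (rule sets_PiM_cong) (use qj[OF that] in auto)
  have mP: "Pair i \<in> measurable (PiM {..<m} (\<lambda>_. q j)) N" if "j < n" for i j
  proof -
    have "Pair i \<in> measurable (PiM {..<m} (\<lambda>_. borel)) N" unfolding N_def by simp
    then show ?thesis using measurable_cong_sets[OF sPi[OF that] refl, of N] by (simp only:)
  qed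
  have jn: "(if i < n then i else 0) < n" for i using n by auto
  have Pg: "prob_space (g i)" for i
    unfolding g_def by (rule prob_space.prob_space_distr[OF PS[OF jn] mP[OF jn]])
  have sg: "sets (g i) = sets N" for i unfolding g_def by simp
  have gm: "g \<in> measurable (measure_pmf (pmf_of_set {..<n})) (subprob_algebra N)"
    using Pg sg by (auto simp: space_subprob_algebra intro: prob_space_imp_subprob_space)
  show "prob_space (test_measure n q m)"
    unfolding T by (rule prob_space.prob_space_bind[OF prob_space_measure_pmf _ gm]) (use Pg in auto)
  show sT: "sets (test_measure n q m) = sets N"
    unfolding T by (rule sets_bind) (use sg in auto)
  assume X: "X \<in> sets N"
  have "emeasure (test_measure n q m) X = (\<integral>\<^sup>+i. emeasure (g i) X \<partial>measure_pmf (pmf_of_set {..<n}))"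
    unfolding T by (rule emeasure_bind[OF _ gm X]) simp
  also have "\<dots> = (\<Sum>i<n. emeasure (g i) X) / of_nat n"
    using n by (subst nn_integral_pmf_of_set) auto
  also have "(\<Sum>i<n. emeasure (g i) X) = (\<Sum>i<n. ennreal (measure (PiM {..<m} (\<lambda>_. q i)) (Pair i -` X \<inter> space (PiM {..<m} (\<lambda>_. q i)))))"
  proof (rule sum.cong[OF refl])
    fix i assume "i \<in> {..<n}"
    then have i: "i < n" by simp
    interpret Pi: prob_space "g i" by (rule Pg)
    have "emeasure (g i) X = ennreal (measure (g i) X)" by (rule Pi.emeasure_eq_measure)
    also have "measure (g i) X = measure (PiM {..<m} (\<lambda>_. q i)) (Pair i -` X \<inter> space (PiM {..<m} (\<lambda>_. q i)))"
      unfolding g_def using i by (simp add: measure_distr[OF mP[OF i] X])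
    finally show "emeasure (g i) X = ennreal (measure (PiM {..<m} (\<lambda>_. q i)) (Pair i -` X \<inter> space (PiM {..<m} (\<lambda>_. q i))))" .
  qed
  also have "\<dots> = ennreal (\<Sum>i<n. measure (PiM {..<m} (\<lambda>_. q i)) (Pair i -` X \<inter> space (PiM {..<m} (\<lambda>_. q i))))"
    by (rule sum_ennreal) simp
  also have "\<dots> / of_nat n = ennreal ((\<Sum>i<n. measure (PiM {..<m} (\<lambda>_. q i)) (Pair i -` X \<inter> space (PiM {..<m} (\<lambda>_. q i)))) / real n)"
  proof -
    have nn: "0 \<le> (\<Sum>i<n. measure (PiM {..<m} (\<lambda>_. q i)) (Pair i -` X \<inter> space (PiM {..<m} (\<lambda>_. q i))))"
      by (intro sum_nonneg measure_nonneg)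
    have "(of_nat n :: ennreal) = ennreal (real n)" by (rule ennreal_of_nat_eq_real_of_nat)
    then show ?thesis using divide_ennreal[OF nn, of "real n"] n by simp
  qed
  finally show "measure (test_measure n q m) X = (\<Sum>i<n. measure (PiM {..<m} (\<lambda>_. q i)) (Pair i -` X \<inter> space (PiM {..<m} (\<lambda>_. q i)))) / real n"
    unfolding measure_def by (simp add: sum_nonneg)
qed


lemma pointwise_levels:
  fixes \<epsilon> d :: real and K :: nat
  assumes "0 < \<epsilon>" "0 \<le> d" "d \<le> \<epsilon> * 4 ^ K"
  shows "d \<le> \<epsilon> / 4 + (\<Sum>b\<le>K. if d > \<epsilon> * 4 ^ b / 4 then \<epsilon> * 4 ^ b else 0)"
  using assms(3)
proof (induction K)
  case 0
  then show ?case using assms(1) by (cases "\<epsilon> / 4 < d") auto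
next
  case (Suc K)
  have nn: "0 \<le> (if d > \<epsilon> * 4 ^ Suc K / 4 then \<epsilon> * 4 ^ Suc K else 0)" using assms(1) by auto
  have nn2: "0 \<le> (\<Sum>b\<le>K. if d > \<epsilon> * 4 ^ b / 4 then \<epsilon> * 4 ^ b else (0::real))"
    using assms(1) by (intro sum_nonneg) auto
  show ?case
  proof (cases "d \<le> \<epsilon> * 4 ^ K")
    case True
    then show ?thesis using Suc.IH nn by simp
  next
    case False
    then have "d > \<epsilon> * 4 ^ Suc K / 4" by simp
    then have "(if d > \<epsilon> * 4 ^ Suc K / 4 then \<epsilon> * 4 ^ Suc K else 0) \<ge> d" using Suc.prems by simp
    then show ?thesis using nn2 assms(1) by simp
  qed
qed

lemma fails_sets:
  "{r \<in> space (count_space UNIV \<Otimes>\<^sub>M PiM {..<m} (\<lambda>_. borel)). test_fails ut thr m r}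
     \<in> sets (count_space UNIV \<Otimes>\<^sub>M PiM {..<m} (\<lambda>_. borel))"
proof -
  let ?N = "count_space UNIV \<Otimes>\<^sub>M PiM {..<m} (\<lambda>_. borel::real measure)"
  have eq: "test_fails ut thr m = (\<lambda>r. thr < \<bar>ut (fst r) - (\<Sum>j<m. snd r j) / real m\<bar>)"
    by (auto simp: test_fails_def fun_eq_iff split: prod.splits)
  have f1: "(\<lambda>r. ut (fst r)) \<in> borel_measurable ?N"
    by (rule measurable_compose[OF measurable_fst]) simp
  have f2: "(\<lambda>r. \<Sum>j<m. snd r j) \<in> borel_measurable ?N"
    by (intro borel_measurable_sum measurable_compose[OF measurable_snd] measurable_component_singleton) auto
  have g: "(\<lambda>r. \<bar>ut (fst r) - (\<Sum>j<m. snd r j) / real m\<bar>) \<in> borel_measurable ?N"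
    using f1 f2 by (intro borel_measurable_abs borel_measurable_diff borel_measurable_divide) auto
  show ?thesis unfolding eq using g[unfolded borel_measurable_iff_greater] by blast
qed

lemma exists_level:
  fixes n K :: nat and \<sigma> \<epsilon> L :: real and d \<pi> :: "nat \<Rightarrow> real"
  assumes eps: "0 < \<epsilon>" and sig: "0 < \<sigma>" and dB: "\<forall>i<n. 0 \<le> d i \<and> d i \<le> \<epsilon> * 4 ^ K"
    and pi: "\<forall>i<n. 0 \<le> \<pi> i \<and> \<pi> i \<le> \<sigma>" and pis: "(\<Sum>i<n. \<pi> i) = 1"
    and big: "(\<Sum>i<n. \<pi> i * d i) \<ge> \<epsilon> / 2" and KL: "real K + 1 \<le> L"
  shows "\<exists>b\<le>K. real (card {i\<in>{..<n}. d i > \<epsilon> * 4 ^ b / 4}) \<ge> 1 / (4 ^ (b + 1) * \<sigma> * L)"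
proof (rule ccontr)
  assume "\<not> ?thesis"
  then have small: "real (card {i\<in>{..<n}. d i > \<epsilon> * 4 ^ b / 4}) < 1 / (4 ^ (b + 1) * \<sigma> * L)" if "b \<le> K" for b
    using that by force
  have Lpos: "L > 0" using KL by linarith
  define T where "T b i = (if d i > \<epsilon> * 4 ^ b / 4 then \<epsilon> * 4 ^ b else (0::real))" for b i
  have A: "(\<Sum>i<n. \<pi> i * d i) \<le> (\<Sum>i<n. \<pi> i * (\<epsilon> / 4 + (\<Sum>b\<le>K. T b i)))"
    by (rule sum_mono, rule mult_left_mono) (use dB pi pointwise_levels[OF eps] in \<open>auto simp: T_def\<close>)
  have B: "(\<Sum>i<n. \<pi> i * (\<epsilon> / 4 + (\<Sum>b\<le>K. T b i))) = (\<Sum>i<n. \<epsilon> / 4 * \<pi> i) + (\<Sum>i<n. \<Sum>b\<le>K. \<pi> i * T b i)"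
    by (simp add: distrib_left sum.distrib sum_distrib_left mult.commute)
  have C: "(\<Sum>i<n. \<Sum>b\<le>K. \<pi> i * T b i) = (\<Sum>b\<le>K. \<Sum>i<n. \<pi> i * T b i)"
    by (rule sum.swap)
  have D: "(\<Sum>i<n. \<epsilon> / 4 * \<pi> i) = \<epsilon> / 4"
    using pis sum_distrib_left[of "\<epsilon> / 4" \<pi> "{..<n}"] by simp
  have "(\<Sum>i<n. \<pi> i * T b i) < \<epsilon> / (4 * L)" if b: "b \<le> K" for b
  proof -
    have "(\<Sum>i<n. \<pi> i * T b i) \<le> (\<Sum>i<n. \<sigma> * T b i)"
      by (rule sum_mono, rule mult_right_mono) (use pi eps in \<open>auto simp: T_def\<close>)
    also have "(\<Sum>i<n. \<sigma> * T b i) = \<sigma> * \<epsilon> * 4 ^ b * real (card {i\<in>{..<n}. d i > \<epsilon> * 4 ^ b / 4})"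
      unfolding T_def by (simp add: sum.If_cases sum_distrib_left[symmetric] Int_def conj_commute)
    also have "\<dots> < \<sigma> * \<epsilon> * 4 ^ b * (1 / (4 ^ (b + 1) * \<sigma> * L))"
      by (rule mult_strict_left_mono[OF small[OF b]]) (use sig eps in simp)
    also have "\<dots> = \<epsilon> / (4 * L)" using sig by (simp add: field_simps)
    finally show ?thesis .
  qed
  then have E: "(\<Sum>b\<le>K. \<Sum>i<n. \<pi> i * T b i) < (\<Sum>b\<le>K. \<epsilon> / (4 * L))"
    by (intro sum_strict_mono) auto
  have F: "(\<Sum>b\<le>K. \<epsilon> / (4 * L)) = (real K + 1) * \<epsilon> / (4 * L)" by simp
  have G: "(real K + 1) * \<epsilon> / (4 * L) \<le> L * \<epsilon> / (4 * L)"
    by (intro divide_right_mono mult_right_mono KL) (use eps Lpos in auto)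
  have H: "L * \<epsilon> / (4 * L) = \<epsilon> / 4" using Lpos by simp
  show False using A B C D E F G H big by linarith
qed




lemma hoeff_sample:
  fixes q :: "real measure" and m :: nat and t u :: real
  assumes q: "prob_space q" and sq: "sets q = sets borel" and q01: "measure q {0..1} = 1"
    and u: "u = (\<integral>x. x \<partial>q)" and m: "0 < m" and t: "0 \<le> t"
  shows "measure (PiM {..<m} (\<lambda>_. q)) {xs \<in> space (PiM {..<m} (\<lambda>_. q)). \<bar>(\<Sum>j<m. xs j) / real m - u\<bar> \<ge> t}
         \<le> 2 * exp (- 2 * real m * t\<^sup>2)"
proof -
  let ?P = "PiM {..<m} (\<lambda>_. q)"
  interpret PP: product_prob_space "\<lambda>_. q" "{..<m}"
    by (intro product_prob_spaceI) (use q in auto)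
  have ind_q: "PP.indep_vars (\<lambda>_. q) (\<lambda>j x. x j) {..<m}"
  proof (subst PP.indep_vars_iff_distr_eq_PiM')
    show "{..<m} \<noteq> {}" using m by auto
    show "(\<lambda>x. x j) \<in> measurable ?P q" if "j \<in> {..<m}" for j
      using that by (auto intro!: measurable_component_singleton)
    have "distr ?P (PiM {..<m} (\<lambda>_. q)) (\<lambda>x. \<lambda>j\<in>{..<m}. x j) = ?P"
      using PP.distr_PiM_restrict_finite[of "{..<m}"] by simp
    also have "?P = PiM {..<m} (\<lambda>j. distr ?P q (\<lambda>x. x j))"
      by (rule PiM_cong) (auto simp: PP.PiM_component)
    finally show "distr ?P (PiM {..<m} (\<lambda>_. q)) (\<lambda>x. \<lambda>j\<in>{..<m}. x j) = PiM {..<m} (\<lambda>j. distr ?P q (\<lambda>x. x j))" .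
  qed
  have ind: "PP.indep_vars (\<lambda>_. borel) (\<lambda>j x. x j) {..<m}"
    using ind_q unfolding PP.indep_vars_def measurable_cong_sets[OF refl sq] sq .
  have AEq: "AE x in q. x \<in> {0..1}"
    using prob_space.AE_in_set_eq_1[OF q, of "{0..1}"] sq q01 by simp
  have AE: "AE x in ?P. x j \<in> {0..1}" if "j \<in> {..<m}" for j
    by (rule PP.AE_component[OF that AEq])
  have ex: "PP.expectation (\<lambda>x. x j) = u" if "j \<in> {..<m}" for j
  proof -
    have "PP.expectation (\<lambda>x. x j) = integral\<^sup>L (distr ?P q (\<lambda>x. x j)) (\<lambda>x. x)"
    proof -
      have m1: "(\<lambda>x. x j) \<in> measurable ?P q" using that by (auto intro!: measurable_component_singleton)
      have m2: "(\<lambda>x::real. x) \<in> borel_measurable q" by (rule measurable_ident_sets[OF sq])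
      show ?thesis using integral_distr[OF m1 m2] by simp
    qed
    also have "distr ?P q (\<lambda>x. x j) = q" using that by (rule PP.PiM_component)
    finally show ?thesis using u by simp
  qed
  interpret H: Hoeffding_ineq ?P "{..<m}" "\<lambda>j x. x j" "\<lambda>_. 0" "\<lambda>_. 1" "real m * u"
    by unfold_locales (use ind AE ex in auto)
  have "PP.prob {x \<in> space ?P. \<bar>(\<Sum>j\<in>{..<m}. x j) - real m * u\<bar> \<ge> real m * t}
       \<le> 2 * exp (-2 * (real m * t)\<^sup>2 / (\<Sum>j\<in>{..<m}. (1 - 0)\<^sup>2))"
    by (rule H.Hoeffding_ineq_abs_ge) (use t m in auto)
  also have "-2 * (real m * t)\<^sup>2 / (\<Sum>j\<in>{..<m}. (1 - 0)\<^sup>2) = - 2 * real m * t\<^sup>2"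
    using m by (simp add: power2_eq_square)
  also have "{x \<in> space ?P. \<bar>(\<Sum>j\<in>{..<m}. x j) - real m * u\<bar> \<ge> real m * t}
     = {xs \<in> space ?P. \<bar>(\<Sum>j<m. xs j) / real m - u\<bar> \<ge> t}"
  proof -
    have "\<bar>s - real m * u\<bar> \<ge> real m * t \<longleftrightarrow> \<bar>s / real m - u\<bar> \<ge> t" for s
    proof -
      have "s - real m * u = real m * (s / real m - u)" using m by (simp add: field_simps)
      then have "\<bar>s - real m * u\<bar> = real m * \<bar>s / real m - u\<bar>" by (simp add: abs_mult)
      then show ?thesis using m by simp
    qed
    then show ?thesis by simp
  qed
  finally show ?thesis .
qed



lemma test_pass_bound:
  fixes n m :: nat and q :: "nat \<Rightarrow> real measure" and u ut :: "nat \<Rightarrow> real" and thr :: real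
  assumes n: "0 < n" and qb: "is_bandit n q" and u: "\<forall>i<n. u i = (\<integral>x. x \<partial>(q i))"
    and m: "0 < m" and thr: "0 \<le> thr"
  defines "S \<equiv> {i \<in> {..<n}. \<bar>u i - ut i\<bar> > 2 * thr}"
  shows "measure (test_measure n q m) {r \<in> space (test_measure n q m). \<not> test_fails ut thr m r}
         \<le> 1 - real (card S) / real n * (1 - 2 * exp (- 2 * real m * thr\<^sup>2))"
proof -
  let ?N = "count_space UNIV \<Otimes>\<^sub>M PiM {..<m} (\<lambda>_. borel)"
  let ?T = "test_measure n q m"
  let ?NF = "{r \<in> space ?T. \<not> test_fails ut thr m r}"
  let ?P = "\<lambda>i. PiM {..<m} (\<lambda>_. q i)"
  let ?\<delta> = "2 * exp (- 2 * real m * thr\<^sup>2)"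
  have sT: "sets ?T = sets ?N" by (rule test_measure_props(2)[OF n qb])
  have spT: "space ?T = space ?N" using sets_eq_imp_space_eq[OF sT] .
  have NF_eq: "?NF = space ?N - {r \<in> space ?N. test_fails ut thr m r}" using spT by auto
  have NF: "?NF \<in> sets ?N" unfolding NF_eq by (intro sets.compl_sets fails_sets)
  have qj: "prob_space (q j)" "sets (q j) = sets borel" "measure (q j) {0..1} = 1" if "j < n" for j
    using qb that unfolding is_bandit_def by auto
  have PS: "prob_space (?P j)" if "j < n" for j
    by (rule prob_space_PiM) (use qj[OF that] in auto)
  have spP: "space (?P j) = space (PiM {..<m} (\<lambda>_. borel))" if "j < n" for j
    by (rule sets_eq_imp_space_eq, rule sets_PiM_cong) (use qj[OF that] in auto)
  have pre: "Pair i -` ?NF \<inter> space (?P i) = {xs \<in> space (?P i). \<not> \<bar>ut i - (\<Sum>j<m. xs j) / real m\<bar> > thr}"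
    if i: "i < n" for i
    using spP[OF i] spT by (auto simp: test_fails_def space_pair_measure)
  have bnd: "measure (?P i) (Pair i -` ?NF \<inter> space (?P i)) \<le> (if i \<in> S then ?\<delta> else 1)"
    if i: "i \<in> {..<n}" for i
  proof (cases "i \<in> S")
    case True
    then have d: "\<bar>u i - ut i\<bar> > 2 * thr" unfolding S_def by auto
    have sub: "Pair i -` ?NF \<inter> space (?P i) \<subseteq> {xs \<in> space (?P i). \<bar>(\<Sum>j<m. xs j) / real m - u i\<bar> \<ge> thr}"
      unfolding pre[OF i[simplified]] using d by auto
    have "measure (?P i) (Pair i -` ?NF \<inter> space (?P i))
          \<le> measure (?P i) {xs \<in> space (?P i). \<bar>(\<Sum>j<m. xs j) / real m - u i\<bar> \<ge> thr}"
    proof (rule finite_measure.finite_measure_mono[OF _ sub])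
      show "finite_measure (?P i)" using PS i unfolding prob_space_def by simp
      have "(\<lambda>xs. \<bar>(\<Sum>j<m. xs j) / real m - u i\<bar>) \<in> borel_measurable (PiM {..<m} (\<lambda>_. borel))"
        by measurable
      then have "(\<lambda>xs. \<bar>(\<Sum>j<m. xs j) / real m - u i\<bar>) \<in> borel_measurable (?P i)"
      proof -
        have sPi: "sets (?P i) = sets (PiM {..<m} (\<lambda>_. borel))"
          by (rule sets_PiM_cong) (use qj i in auto)
        show ?thesis unfolding measurable_cong_sets[OF sPi refl] by fact
      qed
      then show "{xs \<in> space (?P i). \<bar>(\<Sum>j<m. xs j) / real m - u i\<bar> \<ge> thr} \<in> sets (?P i)"
        by measurable
    qed
    also have "\<dots> \<le> ?\<delta>"
      by (rule hoeff_sample) (use qj i u m thr in auto)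
    finally show ?thesis using True by simp
  next
    case False
    then show ?thesis using prob_space.prob_le_1[OF PS] i by simp
  qed
  have "measure ?T ?NF = (\<Sum>i<n. measure (?P i) (Pair i -` ?NF \<inter> space (?P i))) / real n"
    by (rule test_measure_props(3)[OF n qb NF])
  also have "\<dots> \<le> (\<Sum>i<n. (if i \<in> S then ?\<delta> else 1)) / real n"
    by (intro divide_right_mono sum_mono bnd) auto
  also have "(\<Sum>i<n. (if i \<in> S then ?\<delta> else 1)) = real (card S) * ?\<delta> + (real n - real (card S))"
  proof -
    have SS: "S \<subseteq> {..<n}" unfolding S_def by auto
    have "(\<Sum>i<n. (if i \<in> S then ?\<delta> else 1)) = (\<Sum>i\<in>S. ?\<delta>) + (\<Sum>i\<in>{..<n} - S. 1)"
      using SS by (simp add: sum.If_cases Int_absorb1 Diff_eq)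
    also have "\<dots> = real (card S) * ?\<delta> + (real n - real (card S))"
    proof -
      have cS: "card S \<le> n" using card_mono[OF _ SS] by simp
      then show ?thesis using SS by (simp add: card_Diff_subset finite_subset of_nat_diff)
    qed
    finally show ?thesis .
  qed
  also have "(real (card S) * ?\<delta> + (real n - real (card S))) / real n
       = 1 - real (card S) / real n * (1 - ?\<delta>)"
    using n by (simp add: field_simps)
  finally show ?thesis .
qed



lemma verifier_bound:
  fixes n :: nat and \<sigma> \<epsilon> :: real and q :: "nat \<Rightarrow> real measure" and ut :: "nat \<Rightarrow> real" and b :: nat
  assumes n: "0 < n" and qb: "is_bandit n q" and bB: "b \<in> P1_B \<epsilon>"
  shows "measure (verifier_measure n \<sigma> \<epsilon> q) (verifier_rejects_event n \<sigma> \<epsilon> q ut) \<ge>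
     1 - (measure (test_measure n q (P1_m n \<sigma> \<epsilon> b))
           {r \<in> space (test_measure n q (P1_m n \<sigma> \<epsilon> b)).
              \<not> test_fails ut (P1_eps \<epsilon> b / 8) (P1_m n \<sigma> \<epsilon> b) r}) ^ P1_a n \<sigma> \<epsilon> b"
proof -
  define Tests where "Tests = P1_tests n \<sigma> \<epsilon>"
  define Mv where "Mv = (\<lambda>(b::nat, t::nat). test_measure n q (P1_m n \<sigma> \<epsilon> b))"
  define V where "V = verifier_measure n \<sigma> \<epsilon> q"
  have V: "V = PiM Tests Mv" unfolding V_def verifier_measure_def Tests_def Mv_def by simp
  define m where "m = P1_m n \<sigma> \<epsilon> b"
  define a where "a = P1_a n \<sigma> \<epsilon> b"
  define thr where "thr = P1_eps \<epsilon> b / 8"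
  define T where "T = test_measure n q m"
  define NF where "NF = {r \<in> space T. \<not> test_fails ut thr m r}"
  define J where "J = {b} \<times> {1..a}"
  define Fs where "Fs j = {r \<in> space (Mv j). test_fails ut (P1_eps \<epsilon> (fst j) / 8) (P1_m n \<sigma> \<epsilon> (fst j)) r}" for j
  have TestsS: "Tests = Sigma (P1_B \<epsilon>) (\<lambda>b. {1..P1_a n \<sigma> \<epsilon> b})"
    unfolding Tests_def P1_tests_def by auto
  have fin: "finite Tests" unfolding TestsS P1_B_def by (intro finite_SigmaI) auto
  have JT: "J \<subseteq> Tests" unfolding J_def TestsS a_def using bB by auto
  have finJ: "finite J" unfolding J_def by simp
  have cJ: "card J = a" unfolding J_def by (simp add: card_cartesian_product_singleton)
  have MvJ: "Mv j = T" if "j \<in> J" for j using that unfolding J_def Mv_def T_def m_def by auto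
  have PS: "prob_space (Mv j)" for j
    unfolding Mv_def by (cases j) (simp add: test_measure_props(1)[OF n qb])
  have sMv: "sets (Mv j) = sets (count_space UNIV \<Otimes>\<^sub>M PiM {..<P1_m n \<sigma> \<epsilon> (fst j)} (\<lambda>_. borel))" for j
    unfolding Mv_def case_prod_beta by (rule test_measure_props(2)[OF n qb])
  have spMv: "space (Mv j) = space (count_space UNIV \<Otimes>\<^sub>M PiM {..<P1_m n \<sigma> \<epsilon> (fst j)} (\<lambda>_. borel))" for j
    by (rule sets_eq_imp_space_eq[OF sMv])
  have Fs: "Fs j \<in> sets (Mv j)" for j
    unfolding Fs_def sMv spMv by (rule fails_sets)
  have sT: "sets T = sets (count_space UNIV \<Otimes>\<^sub>M PiM {..<m} (\<lambda>_. borel))"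
    unfolding T_def by (rule test_measure_props(2)[OF n qb])
  have spT: "space T = space (count_space UNIV \<Otimes>\<^sub>M PiM {..<m} (\<lambda>_. borel))"
    by (rule sets_eq_imp_space_eq[OF sT])
  have NF: "NF \<in> sets T"
  proof -
    have "NF = space T - {r \<in> space T. test_fails ut thr m r}" unfolding NF_def by auto
    then show ?thesis unfolding sT spT by (simp add: sets.compl_sets fails_sets)
  qed
  interpret PV: prob_space V unfolding V by (rule prob_space_PiM) (rule PS)
  have Rej_eq: "verifier_rejects_event n \<sigma> \<epsilon> q ut = (\<Union>j\<in>Tests. (\<lambda>\<omega>. \<omega> j) -` Fs j \<inter> space V)"
  proof -
    have sp: "\<omega> j \<in> space (Mv j)" if "\<omega> \<in> space V" "j \<in> Tests" for \<omega> j
      using that unfolding V by (auto simp: space_PiM)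
    show ?thesis
      unfolding verifier_rejects_event_def V_def[symmetric] Tests_def[symmetric] Fs_def
      using sp apply (auto simp: Tests_def)
      by (metis (no_types, lifting) case_prod_conv)
  qed
  have Rej: "verifier_rejects_event n \<sigma> \<epsilon> q ut \<in> sets V"
    unfolding Rej_eq
  proof (rule sets.finite_UN[OF fin])
    fix j assume j: "j \<in> Tests"
    show "(\<lambda>\<omega>. \<omega> j) -` Fs j \<inter> space V \<in> sets V"
      unfolding V by (rule measurable_sets[OF measurable_component_singleton[OF j] Fs])
  qed
  define E where "E = prod_emb Tests Mv J (Pi\<^sub>E J (\<lambda>_. NF))"
  have E: "E \<in> sets V" unfolding E_def V
    by (rule sets_PiM_I[OF _ JT]) (use NF MvJ in \<open>auto simp: finJ fin\<close>)
  have sub: "space V - verifier_rejects_event n \<sigma> \<epsilon> q ut \<subseteq> E"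
  proof
    fix \<omega> assume w: "\<omega> \<in> space V - verifier_rejects_event n \<sigma> \<epsilon> q ut"
    then have wV: "\<omega> \<in> space V" by simp
    have "\<omega> j \<in> NF" if j: "j \<in> J" for j
    proof -
      have jT: "j \<in> Tests" using j JT by auto
      have "\<omega> j \<notin> Fs j" using w jT unfolding Rej_eq by auto
      moreover have "\<omega> j \<in> space (Mv j)" using wV jT unfolding V by (auto simp: space_PiM)
      moreover have "fst j = b" using j unfolding J_def by auto
      ultimately show ?thesis unfolding Fs_def NF_def MvJ[OF j] thr_def m_def by auto
    qed
    then show "\<omega> \<in> E" unfolding E_def prod_emb_def using wV unfolding V by (auto simp: space_PiM)
  qed
  have "emeasure V E = (\<Prod>j\<in>J. emeasure (Mv j) NF)"
    unfolding E_def V by (rule emeasure_PiM_emb[OF PS JT finJ]) (use NF MvJ in auto)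
  also have "\<dots> = (\<Prod>j\<in>J. ennreal (measure T NF))"
  proof (rule prod.cong[OF refl])
    fix j assume j: "j \<in> J"
    interpret PT: prob_space T unfolding T_def by (rule test_measure_props(1)[OF n qb])
    show "emeasure (Mv j) NF = ennreal (measure T NF)" using MvJ[OF j] PT.emeasure_eq_measure by simp
  qed
  also have "\<dots> = ennreal ((measure T NF) ^ a)"
    by (simp add: cJ ennreal_power)
  finally have mE: "measure V E = (measure T NF) ^ a"
    unfolding measure_def by simp
  have "measure V (space V - verifier_rejects_event n \<sigma> \<epsilon> q ut) \<le> measure V E"
    by (rule PV.finite_measure_mono[OF sub E])
  moreover have "measure V (space V - verifier_rejects_event n \<sigma> \<epsilon> q ut) = 1 - measure V (verifier_rejects_event n \<sigma> \<epsilon> q ut)"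
    by (rule PV.prob_compl[OF Rej])
  ultimately show ?thesis
    using mE unfolding V_def NF_def T_def thr_def m_def a_def by linarith
qed



lemma num_final:
  fixes x p \<delta> :: real and a :: nat
  assumes x0: "0 \<le> x" and x1: "x \<le> 1 - p * (1 - \<delta>)" and p0: "0 \<le> p"
    and d: "\<delta> \<le> 1/8" and pa: "p * real a \<ge> ln 6"
  shows "x ^ a \<le> 1/3"
proof -
  have "x ^ a \<le> (1 - p * (1 - \<delta>)) ^ a" by (rule power_mono[OF x1 x0])
  also have "\<dots> \<le> exp (- (p * (1 - \<delta>))) ^ a"
    by (rule power_mono) (use exp_ge_add_one_self[of "- (p * (1 - \<delta>))"] x0 x1 in auto)
  also have "\<dots> = exp (- (p * (1 - \<delta>) * real a))"
    by (subst exp_of_nat_mult[symmetric]) (simp add: algebra_simps)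
  also have "\<dots> \<le> exp (- (7/8 * ln 6))"
  proof -
    have "7/8 * ln 6 \<le> (1 - \<delta>) * ln 6" by (rule mult_right_mono) (use d in auto)
    also have "\<dots> \<le> (1 - \<delta>) * (p * real a)" by (rule mult_left_mono[OF pa]) (use d in auto)
    finally show ?thesis by (simp add: algebra_simps)
  qed
  also have "\<dots> \<le> 1/3"
  proof -
    have "ln ((3::real) ^ 8) \<le> ln ((6::real) ^ 7)" by (subst ln_le_cancel_iff) auto
    then have "8 * ln (3::real) \<le> 7 * ln 6" by (simp only: ln_realpow)
    then have "ln 3 \<le> 7/8 * ln (6::real)" by simp
    then have "exp (ln 3) \<le> exp (7/8 * ln (6::real))" by (simp only: exp_le_cancel_iff)
    then have "3 \<le> exp (7/8 * ln (6::real))" using exp_ln[of "3::real"] by simp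
    then show ?thesis by (simp add: exp_minus field_simps)
  qed
  finally show ?thesis .
qed




theorem mainTheorem2:
  fixes n :: nat and \<sigma> \<epsilon> :: real and q :: "nat \<Rightarrow> real measure"
    and u ut :: "nat \<Rightarrow> real"
  assumes "0 < n"
    and "1 / real n \<le> \<sigma>" and "\<sigma> \<le> 1"
    and "0 < \<epsilon>" and "\<epsilon> < 1"
    and "is_bandit n q"
    and "\<forall>i<n. u i = (\<integral>x. x \<partial>(q i))"
    and "\<forall>i<n. 0 \<le> ut i \<and> ut i \<le> 1"
    and "\<exists>\<pi>. smooth_strategy n \<sigma> \<pi> \<and> \<bar>dotp n \<pi> u - dotp n \<pi> ut\<bar> \<ge> \<epsilon> / 2"
  shows "measure (verifier_measure n \<sigma> \<epsilon> q) (verifier_rejects_event n \<sigma> \<epsilon> q ut) \<ge> 2 / 3"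
proof -
  note n = assms(1) and qb = assms(6) and u = assms(7) and ut = assms(8)
  note eps = assms(4) and eps1 = assms(5)
  obtain \<pi> where sm: "smooth_strategy n \<sigma> \<pi>" and gap: "\<bar>dotp n \<pi> u - dotp n \<pi> ut\<bar> \<ge> \<epsilon> / 2"
    using assms(9) by blast
  have pi: "\<forall>i<n. 0 \<le> \<pi> i \<and> \<pi> i \<le> \<sigma>" and pisum: "(\<Sum>i<n. \<pi> i) = 1"
    using sm unfolding smooth_strategy_def by auto
  have sig: "0 < \<sigma>"
  proof -
    have "0 < 1 / real n" using n by simp
    then show ?thesis using assms(2) by linarith
  qed
  have qj: "prob_space (q j)" "sets (q j) = sets borel" "measure (q j) {0..1} = 1" if "j < n" for j
    using qb that unfolding is_bandit_def by auto
  have u01: "0 \<le> u i \<and> u i \<le> 1" if i: "i < n" for i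
  proof -
    interpret Q: prob_space "q i" by (rule qj(1)[OF i])
    have AE: "AE x in q i. x \<in> {0..1}"
      using Q.AE_in_set_eq_1[of "{0..1}"] qj[OF i] by simp
    have mx: "(\<lambda>x::real. x) \<in> borel_measurable (q i)" by (rule measurable_ident_sets[OF qj(2)[OF i]])
    have int: "integrable (q i) (\<lambda>x. x)"
      by (rule Q.integrable_const_bound[where B=1]) (use AE mx in auto)
    have "0 \<le> (\<integral>x. x \<partial>(q i))" by (rule integral_nonneg_AE) (use AE in auto)
    moreover have "(\<integral>x. x \<partial>(q i)) \<le> (\<integral>x. (1::real) \<partial>(q i))"
      by (rule integral_mono_AE[OF int]) (use AE in auto)
    moreover have "(\<integral>x. (1::real) \<partial>(q i)) = 1" using Q.prob_space by (simp add: lebesgue_integral_const)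
    ultimately show ?thesis using u i by simp
  qed
  define d where "d i = \<bar>u i - ut i\<bar>" for i
  have d01: "0 \<le> d i \<and> d i \<le> 1" if "i < n" for i
    using u01[OF that] ut that unfolding d_def by auto
  have big: "(\<Sum>i<n. \<pi> i * d i) \<ge> \<epsilon> / 2"
  proof -
    have "dotp n \<pi> u - dotp n \<pi> ut = (\<Sum>i<n. \<pi> i * (u i - ut i))"
      unfolding dotp_def by (simp add: sum_subtractf[symmetric] right_diff_distrib)
    also have "\<bar>\<dots>\<bar> \<le> (\<Sum>i<n. \<bar>\<pi> i * (u i - ut i)\<bar>)" by (rule sum_abs)
    also have "\<dots> = (\<Sum>i<n. \<pi> i * d i)"
      by (rule sum.cong[OF refl]) (use pi in \<open>auto simp: d_def abs_mult\<close>)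
    finally show ?thesis using gap by linarith
  qed
  define K where "K = nat \<lceil>log 4 (1 / \<epsilon>)\<rceil>"
  define L where "L = P1_L \<epsilon>"
  have lpos: "0 < log 4 (1 / \<epsilon>)" using eps eps1 by simp
  have Ldef: "L = log 4 (1 / \<epsilon>) + 2" unfolding L_def P1_L_def by simp
  have KL: "real K + 1 \<le> L"
  proof -
    have "real K = of_int \<lceil>log 4 (1 / \<epsilon>)\<rceil>" unfolding K_def using lpos by simp
    then show ?thesis unfolding Ldef using of_int_ceiling_le_add_one[of "log 4 (1 / \<epsilon>)"] by linarith
  qed
  have K4: "\<epsilon> * 4 ^ K \<ge> 1"
  proof -
    have Kg: "log 4 (1 / \<epsilon>) \<le> real K" unfolding K_def by (rule real_nat_ceiling_ge)
    have "1 / \<epsilon> = 4 powr (log 4 (1 / \<epsilon>))" using eps by simp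
    also have "\<dots> \<le> 4 powr (real K)" by (rule powr_mono[OF Kg]) simp
    also have "\<dots> = 4 ^ K" by (simp add: powr_realpow)
    finally have "1 / \<epsilon> \<le> 4 ^ K" .
    then show ?thesis using eps by (simp add: field_simps)
  qed
  have dB: "\<forall>i<n. 0 \<le> d i \<and> d i \<le> \<epsilon> * 4 ^ K" using d01 K4 by force
  obtain b where bK: "b \<le> K" and cardS: "real (card {i\<in>{..<n}. d i > \<epsilon> * 4 ^ b / 4}) \<ge> 1 / (4 ^ (b + 1) * \<sigma> * L)"
    using exists_level[OF eps sig dB pi pisum big KL] by blast
  define m where "m = P1_m n \<sigma> \<epsilon> b"
  define a where "a = P1_a n \<sigma> \<epsilon> b"
  define e where "e = P1_eps \<epsilon> b"
  define thr where "thr = e / 8"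
  have epos: "0 < e" unfolding e_def P1_eps_def using eps by simp
  have thr0: "0 \<le> thr" unfolding thr_def using epos by simp
  have bB: "b \<in> P1_B \<epsilon>" using bK unfolding P1_B_def K_def by simp
  have Lpos: "2 < L" using lpos Ldef by simp
  have a_ge: "real a \<ge> 4 ^ b * 4 * real n * \<sigma> * L * ln 6"
    unfolding a_def P1_a_def L_def by (rule real_nat_ceiling_ge)
  have rhs_pos: "4 ^ b * 4 * real n * \<sigma> * L * ln 6 > 0" using n sig Lpos by simp
  have a_pos: "real a \<ge> 1"
  proof -
    have "0 < real a" using a_ge rhs_pos by linarith
    then have "0 < a" by simp
    then show ?thesis by simp
  qed
  have ln1: "1 \<le> ln (12 * L * real a)"
  proof -
    have "12 * 2 * 1 \<le> 12 * L * real a" by (intro mult_mono) (use Lpos a_pos in auto)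
    then have le: "exp 1 \<le> 12 * L * real a" using exp_le by linarith
    have "ln (exp 1) \<le> ln (12 * L * real a)"
      by (subst ln_le_cancel_iff) (use le Lpos a_pos in auto)
    then show ?thesis by simp
  qed
  have m_ge: "real m \<ge> 128 * ln (12 * L * real a) / e\<^sup>2"
    unfolding m_def P1_m_def L_def a_def e_def by (rule real_nat_ceiling_ge)
  have me: "real m * e\<^sup>2 \<ge> 128 * ln (12 * L * real a)"
    using m_ge epos by (simp add: divide_le_eq)
  have mpos: "0 < m"
  proof -
    have "0 < real m * e\<^sup>2" using me ln1 by linarith
    then show ?thesis using epos by (simp add: zero_less_mult_iff)
  qed
  have expo: "2 * real m * thr\<^sup>2 \<ge> 4"
  proof -
    have "2 * real m * thr\<^sup>2 = real m * e\<^sup>2 / 32" unfolding thr_def by (simp add: power2_eq_square field_simps)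
    then show ?thesis using me ln1 by linarith
  qed
  have dl: "2 * exp (- 2 * real m * thr\<^sup>2) \<le> 1 / 8"
  proof -
    have "exp (- 2 * real m * thr\<^sup>2) \<le> exp (- 4)" using expo by simp
    have e2: "2 \<le> exp (1::real)" using exp_ge_add_one_self[of "1::real"] by simp
    have "exp (4::real) = exp 1 ^ 4" using exp_of_nat_mult[of 4 "1::real"] by simp
    also have "\<dots> \<ge> 2 ^ 4" by (rule power_mono[OF e2]) simp
    finally have "16 \<le> exp (4::real)" by simp
    then have "exp (- 4::real) \<le> 1 / 16" by (simp add: exp_minus field_simps)
    then show ?thesis using \<open>exp (- 2 * real m * thr\<^sup>2) \<le> exp (- 4)\<close> by linarith
  qed
  have thr_eq: "\<epsilon> * 4 ^ b / 4 = 2 * thr" unfolding thr_def e_def P1_eps_def by simp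
  define S where "S = {i \<in> {..<n}. \<bar>u i - ut i\<bar> > 2 * thr}"
  have Seq: "{i\<in>{..<n}. d i > \<epsilon> * 4 ^ b / 4} = S" unfolding S_def d_def thr_eq ..
  define p where "p = real (card S) / real n"
  have p0: "0 \<le> p" unfolding p_def by simp
  have pass: "measure (test_measure n q m) {r \<in> space (test_measure n q m). \<not> test_fails ut thr m r}
      \<le> 1 - p * (1 - 2 * exp (- 2 * real m * thr\<^sup>2))"
    using test_pass_bound[OF n qb u mpos thr0, of ut] unfolding p_def S_def by simp
  have pa: "p * real a \<ge> ln 6"
  proof -
    have X: "0 < 4 ^ (b + 1) * \<sigma> * L" using sig Lpos by simp
    have cS: "1 \<le> real (card S) * (4 ^ (b + 1) * \<sigma> * L)"
      using cardS X unfolding Seq by (simp add: divide_le_eq)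
    have "p * (4 ^ b * 4 * real n * \<sigma> * L * ln 6) \<le> p * real a" by (rule mult_left_mono[OF a_ge p0])
    moreover have "p * (4 ^ b * 4 * real n * \<sigma> * L * ln 6) = (real (card S) * (4 ^ (b + 1) * \<sigma> * L)) * ln 6"
      unfolding p_def using n by (simp add: field_simps)
    moreover have "1 * ln 6 \<le> (real (card S) * (4 ^ (b + 1) * \<sigma> * L)) * ln (6::real)"
      by (rule mult_right_mono[OF cS]) simp
    ultimately show ?thesis by linarith
  qed
  have vb: "measure (verifier_measure n \<sigma> \<epsilon> q) (verifier_rejects_event n \<sigma> \<epsilon> q ut) \<ge>
     1 - (measure (test_measure n q m) {r \<in> space (test_measure n q m). \<not> test_fails ut thr m r}) ^ a"
    unfolding m_def a_def thr_def e_def by (rule verifier_bound[OF n qb bB])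
  have "(measure (test_measure n q m) {r \<in> space (test_measure n q m). \<not> test_fails ut thr m r}) ^ a \<le> 1 / 3"
    by (rule num_final[OF measure_nonneg pass p0 dl pa])
  then show ?thesis using vb by linarith
qed


end
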